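(* For every 3-periodic $P_1P_2P_3$ of the elliptic billiard, $$\sum_{i=1}^3\frac{1}{|P_i-f_1|}=\frac{a^2+b^2+\delta}{ab^2}=\frac{J\sqrt2\sqrt{JL+\sqrt{9-2JL}-3}}{JL-4},\qquad \delta=\sqrt{a^4-a^2b^2+b^4}.$$
   Context: The elliptic billiard is $\mathcal{E}: x^2/a^2+y^2/b^2=1$, $a>b>0$, $c=\sqrt{a^2-b^2}$, with focus $f_1=(-c,0)$. A 3-periodic is a triangle $P_1P_2P_3$ inscribed in $\mathcal{E}$ that is a closed billiard trajectory (at each vertex the normal to $\mathcal{E}$ bisects the angle between the two incident sides). $L$ is the perimeter (the same for all 3-periodics), $J$ is Joachimsthal's constant $J=\frac12\nabla f(P_i)\cdot\hat v>0$ ($f=x^2/a^2+y^2/b^2$, $\hat v$ unit direction of the trajectory at $P_i$); explicitly $J=\sqrt{2\delta-a^2-b^2}/c^2$ and $L=2(\delta+a^2+b^2)J$. *)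

theory Defs
  imports "HOL-Analysis.Analysis"
begin

type_synonym pt = "real \<times> real"

definition on_ellipse :: "real \<Rightarrow> real \<Rightarrow> pt \<Rightarrow> bool" where
  "on_ellipse a b P \<longleftrightarrow> (fst P)^2 / a^2 + (snd P)^2 / b^2 = 1"

text \<open>Gradient of f(x,y) = x^2/a^2 + y^2/b^2, a normal to the ellipse at P.\<close>
definition ell_normal :: "real \<Rightarrow> real \<Rightarrow> pt \<Rightarrow> pt" where
  "ell_normal a b P = (2 * fst P / a^2, 2 * snd P / b^2)"

definition cross2 :: "pt \<Rightarrow> pt \<Rightarrow> real" where
  "cross2 u v = fst u * snd v - snd u * fst v"

definition unitv :: "pt \<Rightarrow> pt" where
  "unitv v = (1 / norm v) *\<^sub>R v"

text \<open>Billiard reflection at vertex P with neighbours Q, R: the normal line at P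
  bisects the angle QPR, i.e. the sum of the unit vectors from P towards Q and R
  is parallel to the normal.\<close>
definition reflects_at :: "real \<Rightarrow> real \<Rightarrow> pt \<Rightarrow> pt \<Rightarrow> pt \<Rightarrow> bool" where
  "reflects_at a b Q P R \<longleftrightarrow>
     cross2 (unitv (Q - P) + unitv (R - P)) (ell_normal a b P) = 0"

definition three_periodic :: "real \<Rightarrow> real \<Rightarrow> pt \<Rightarrow> pt \<Rightarrow> pt \<Rightarrow> bool" where
  "three_periodic a b P1 P2 P3 \<longleftrightarrow>
     on_ellipse a b P1 \<and> on_ellipse a b P2 \<and> on_ellipse a b P3 \<and>
     P1 \<noteq> P2 \<and> P2 \<noteq> P3 \<and> P3 \<noteq> P1 \<and>
     reflects_at a b P3 P1 P2 \<and> reflects_at a b P1 P2 P3 \<and> reflects_at a b P2 P3 P1"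

definition perimeter :: "pt \<Rightarrow> pt \<Rightarrow> pt \<Rightarrow> real" where
  "perimeter P1 P2 P3 = dist P1 P2 + dist P2 P3 + dist P3 P1"

text \<open>Joachimsthal's constant: J = 1/2 grad f(P1) . v, v the unit direction of the
  trajectory arriving at P1 (from P3), which gives J > 0.\<close>
definition joachimsthal :: "real \<Rightarrow> real \<Rightarrow> pt \<Rightarrow> pt \<Rightarrow> real" where
  "joachimsthal a b P3 P1 = (1/2) * (ell_normal a b P1 \<bullet> unitv (P1 - P3))"

end

theory Submission
  imports Defs
begin


lemma chord:
  fixes n1 n2 r X2 Y2 X3 Y3 :: real
  assumes c2: "X2^2+Y2^2=1" and c3: "X3^2+Y3^2=1"
    and l2: "n1*X2+n2*Y2 = r" and l3: "n1*X3+n2*Y3=r"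
    and ne: "(X2,Y2) \<noteq> (X3,Y3)" and nz: "n1^2+n2^2 \<noteq> 0"
  shows "(n1^2+n2^2)*(X2+X3) = 2*r*n1" "(n1^2+n2^2)*(X2*X3) = r^2 - n2^2"
    "(n1^2+n2^2)*(Y2*Y3) = r^2 - n1^2"
proof -
  define N where "N = n1^2+n2^2"
  define d1 where "d1 = X2-X3"
  define d2 where "d2 = Y2-Y3"
  define S1 where "S1 = X2+X3"
  define S2 where "S2 = Y2+Y3"
  have nd: "n1*d1+n2*d2 = 0" using l2 l3 unfolding d1_def d2_def by (simp add: algebra_simps)
  have sd: "S1*d1+S2*d2 = 0" using c2 c3 unfolding d1_def d2_def S1_def S2_def
    by (simp add: algebra_simps power2_eq_square)
  have dnz: "d1 \<noteq> 0 \<or> d2 \<noteq> 0" using ne unfolding d1_def d2_def by auto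
  have e1: "d1*(S1*n2-S2*n1) = n2*(S1*d1+S2*d2) - S2*(n1*d1+n2*d2)" by (simp add: algebra_simps)
  have e2: "d2*(S1*n2-S2*n1) = S1*(n1*d1+n2*d2) - n1*(S1*d1+S2*d2)" by (simp add: algebra_simps)
  have cr: "S1*n2-S2*n1 = 0" using e1 e2 nd sd dnz by auto
  have sn: "S1*n1+S2*n2 = 2*r" using l2 l3 unfolding S1_def S2_def by (simp add: algebra_simps)
  have hS1: "N*S1 = 2*r*n1"
  proof -
    have "N*S1 = (S1*n1+S2*n2)*n1 + n2*(S1*n2-S2*n1)" unfolding N_def by (simp add: algebra_simps power2_eq_square)
    then show ?thesis using cr sn by simp
  qed
  have hS2: "N*S2 = 2*r*n2"
  proof -
    have "N*S2 = (S1*n1+S2*n2)*n2 - n1*(S1*n2-S2*n1)" unfolding N_def by (simp add: algebra_simps power2_eq_square)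
    then show ?thesis using cr sn by simp
  qed
  have Nnz: "N \<noteq> 0" using nz N_def by simp
  have SS: "N*(S1^2+S2^2) = 4*r^2"
  proof -
    have "N*(N*(S1^2+S2^2)) = (N*S1)^2+(N*S2)^2" by (simp add: algebra_simps power2_eq_square)
    also have "\<dots> = 4*r^2*N" using hS1 hS2 unfolding N_def by (simp add: algebra_simps power2_eq_square)
    finally show ?thesis using Nnz by (simp add: mult.commute)
  qed
  have DD: "d1^2+d2^2 = 4 - (S1^2+S2^2)" using c2 c3 unfolding d1_def d2_def S1_def S2_def
    by (simp add: algebra_simps power2_eq_square)
  have Nd1: "N*d1^2 = n2^2*(d1^2+d2^2)"
  proof -
    have "N*d1^2 - n2^2*(d1^2+d2^2) = (n1*d1-n2*d2)*(n1*d1+n2*d2)" unfolding N_def by (simp add: algebra_simps power2_eq_square)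
    then show ?thesis using nd by simp
  qed
  have Nd2: "N*d2^2 = n1^2*(d1^2+d2^2)"
  proof -
    have "N*d2^2 - n1^2*(d1^2+d2^2) = (n2*d2-n1*d1)*(n1*d1+n2*d2)" unfolding N_def by (simp add: algebra_simps power2_eq_square)
    then show ?thesis using nd by simp
  qed
  have x23: "4*(X2*X3) = S1^2 - d1^2" unfolding S1_def d1_def by (simp add: algebra_simps power2_eq_square)
  have y23: "4*(Y2*Y3) = S2^2 - d2^2" unfolding S2_def d2_def by (simp add: algebra_simps power2_eq_square)
  have "N*(N*(4*(X2*X3))) = (N*S1)^2 - N*(N*d1^2)"
    unfolding x23 by (simp add: algebra_simps power2_eq_square)
  also have "\<dots> = (N*S1)^2 - N*n2^2*(4 - (S1^2+S2^2))" using Nd1 DD by simp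
  also have "\<dots> = (N*S1)^2 - n2^2*(4*N - N*(S1^2+S2^2))" by (simp add: algebra_simps)
  also have "\<dots> = 4*r^2*n1^2 - n2^2*(4*N - 4*r^2)" unfolding SS hS1 by (simp add: algebra_simps power2_eq_square)
  also have "\<dots> = N*(4*(r^2 - n2^2))" unfolding N_def by (simp add: algebra_simps power2_eq_square)
  finally have "N*(4*(X2*X3)) = 4*(r^2-n2^2)" using Nnz by simp
  then show "(n1^2+n2^2)*(X2*X3) = r^2 - n2^2" unfolding N_def by simp
  have "N*(N*(4*(Y2*Y3))) = (N*S2)^2 - N*(N*d2^2)"
    unfolding y23 by (simp add: algebra_simps power2_eq_square)
  also have "\<dots> = (N*S2)^2 - N*n1^2*(4 - (S1^2+S2^2))" using Nd2 DD by simp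
  also have "\<dots> = (N*S2)^2 - n1^2*(4*N - N*(S1^2+S2^2))" by (simp add: algebra_simps)
  also have "\<dots> = 4*r^2*n2^2 - n1^2*(4*N - 4*r^2)" unfolding SS hS2 by (simp add: algebra_simps power2_eq_square)
  also have "\<dots> = N*(4*(r^2 - n1^2))" unfolding N_def by (simp add: algebra_simps power2_eq_square)
  finally have "N*(4*(Y2*Y3)) = 4*(r^2-n1^2)" using Nnz by simp
  then show "(n1^2+n2^2)*(Y2*Y3) = r^2 - n1^2" unfolding N_def by simp
  show "(n1^2+n2^2)*(X2+X3) = 2*r*n1" using hS1 unfolding N_def S1_def .
qed




lemma polar:
  fixes A B k X Y X' Y' :: real
  assumes "1 - X*X' - Y*Y' = k*(A*(1-X*X'+Y*Y')+B*(1+X*X'-Y*Y'))"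
  shows "(1-k*(A-B))*(X*X') + (1+k*(A-B))*(Y*Y') = 1 - k*(A+B)"
  using assms by (simp add: algebra_simps)

lemma core:
  fixes A B k X1 Y1 X2 Y2 X3 Y3 :: real
  assumes AB: "A > B" "B > 0" and kp: "k > 0"
    and c1: "X1^2+Y1^2=1" and c2: "X2^2+Y2^2=1" and c3: "X3^2+Y3^2=1"
    and ne: "(X2,Y2) \<noteq> (X3,Y3)"
    and r12: "(1-k*(A-B))*(X1*X2) + (1+k*(A-B))*(Y1*Y2) = 1 - k*(A+B)"
    and r13: "(1-k*(A-B))*(X1*X3) + (1+k*(A-B))*(Y1*Y3) = 1 - k*(A+B)"
    and r23: "(1-k*(A-B))*(X2*X3) + (1+k*(A-B))*(Y2*Y3) = 1 - k*(A+B)"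
  defines "p \<equiv> 1-k*(A-B)" and "q \<equiv> 1+k*(A-B)" and "r \<equiv> 1 - k*(A+B)"
  defines "N \<equiv> (p*X1)^2+(q*Y1)^2"
  shows "k^2*(A-B)^2 + 2*(A+B)*k - 3 = 0" and "N \<noteq> 0"
    and "N*(X2+X3) = 2*r*(p*X1)" and "N*(X2*X3) = r^2 - (q*Y1)^2"
proof -
  have qp: "q > 0" unfolding q_def using AB kp by (simp add: add_pos_pos)
  show Nnz: "N \<noteq> 0"
  proof
    assume N0: "N = 0"
    have "(q*Y1)^2 = 0" using N0 unfolding N_def by (smt (verit) zero_le_power2)
    hence Y0: "Y1 = 0" using qp by simp
    have "(p*X1)^2 = 0" using N0 unfolding N_def by (smt (verit) zero_le_power2)
    moreover have "X1^2 = 1" using c1 Y0 by simp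
    ultimately have p0: "p = 0" by (simp add: power_mult_distrib)
    have "r = 0" using r12 Y0 p0 unfolding p_def r_def by simp
    moreover have "r = - 2*k*B" using p0 unfolding p_def r_def by (simp add: algebra_simps)
    ultimately show False using kp AB by simp
  qed
  have l2: "(p*X1)*X2 + (q*Y1)*Y2 = r" using r12 unfolding p_def q_def r_def by (simp add: algebra_simps)
  have l3: "(p*X1)*X3 + (q*Y1)*Y3 = r" using r13 unfolding p_def q_def r_def by (simp add: algebra_simps)
  have nz: "(p*X1)^2 + (q*Y1)^2 \<noteq> 0" using Nnz N_def by simp
  note ch = chord[OF c2 c3 l2 l3 ne nz]
  show s: "N*(X2+X3) = 2*r*(p*X1)" using ch(1) N_def by simp
  show t: "N*(X2*X3) = r^2 - (q*Y1)^2" using ch(2) N_def by simp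
  have t2: "N*(Y2*Y3) = r^2 - (p*X1)^2" using ch(3) N_def by simp
  have "p*(N*(X2*X3)) + q*(N*(Y2*Y3)) = r*N" using r23 unfolding p_def q_def r_def
    by (metis distrib_left mult.commute mult.left_commute)
  hence E: "p*(r^2 - (q*Y1)^2) + q*(r^2 - (p*X1)^2) - r*N = 0" using t t2 by simp
  have Y1s: "Y1^2 = 1 - X1^2" using c1 by simp
  have "p*(r^2 - (q*Y1)^2) + q*(r^2 - (p*X1)^2) - r*N
      = 2*k*(k^2*(A-B)^2 + 2*(A+B)*k - 3)*(A - (A-B)*X1^2)"
    unfolding N_def power_mult_distrib Y1s unfolding p_def q_def r_def
    by (simp add: algebra_simps power2_eq_square power3_eq_cube)
  hence prod: "2*k*(k^2*(A-B)^2 + 2*(A+B)*k - 3)*(A - (A-B)*X1^2) = 0" using E by simp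
  have "X1^2 \<le> 1" using c1 by (smt (verit) zero_le_power2)
  have "(A-B)*X1^2 \<le> (A-B)*1" using AB \<open>X1^2 \<le> 1\<close> by (intro mult_left_mono) auto
  hence "A - (A-B)*X1^2 > 0" using AB by (smt (verit) mult.right_neutral)
  then show "k^2*(A-B)^2 + 2*(A+B)*k - 3 = 0" using prod kp by simp
qed




lemma symfun:
  fixes A B k X1 Y1 X2 X3 p q r N :: real
  assumes g: "k^2*(A-B)^2 + 2*(A+B)*k - 3 = 0"
    and p: "p = 1-k*(A-B)" and q: "q = 1+k*(A-B)" and r: "r = 1 - k*(A+B)"
    and N: "N = (p*X1)^2+(q*Y1)^2" and Nnz: "N \<noteq> 0"
    and Y1s: "Y1^2 = 1 - X1^2"
    and s: "N*(X2+X3) = 2*r*(p*X1)" and t: "N*(X2*X3) = r^2 - (q*Y1)^2"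
  shows "q^2*(X1*X2+X1*X3+X2*X3) = r^2 - q^2"
    and "(p^2-q^2)*(X1*X2*X3) = q^2*(X1+X2+X3)"
proof -
  have I1: "(r^2-q^2)*(p^2-q^2) - q^2*(q^2+2*r*p) = 0"
  proof -
    have "(r^2-q^2)*(p^2-q^2) - q^2*(q^2+2*r*p) = (k^2*(A-B)^2 + 2*(A+B)*k - 3) *
       (1 - 2*B*k + B^2*k^2 + 2*A*k + 2*A*B*k^2 - 3*A^2*k^2)"
      unfolding p q r by (simp add: algebra_simps power2_eq_square)
    then show ?thesis using g by simp
  qed
  have N': "N = p^2*X1^2 + q^2*(1-X1^2)" using N Y1s by (simp add: power_mult_distrib)
  have "N*(q^2*(X1*X2+X1*X3+X2*X3)) = q^2*(X1*(N*(X2+X3)) + N*(X2*X3))" by (simp add: algebra_simps)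
  also have "\<dots> = q^2*(X1*(2*r*(p*X1)) + r^2 - q^2*(1-X1^2))" using s t Y1s by (simp add: power_mult_distrib)
  also have "\<dots> = N*(r^2-q^2) - X1^2*((r^2-q^2)*(p^2-q^2) - q^2*(q^2+2*r*p))"
    unfolding N' by (simp add: algebra_simps power2_eq_square)
  finally show "q^2*(X1*X2+X1*X3+X2*X3) = r^2 - q^2" using I1 Nnz by simp
  have "N*((p^2-q^2)*(X1*X2*X3)) = (p^2-q^2)*X1*(N*(X2*X3))" by (simp add: algebra_simps)
  also have "\<dots> = (p^2-q^2)*X1*(r^2 - q^2*(1-X1^2))" using t Y1s by (simp add: power_mult_distrib)
  also have "\<dots> = N*(q^2*(X1+X2+X3)) + X1*((r^2-q^2)*(p^2-q^2) - q^2*(q^2+2*r*p))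
        - q^2*(X1*N + N*(X2+X3) - X1*(N + 2*r*p))"
    unfolding N' by (simp add: algebra_simps power2_eq_square)
  also have "\<dots> = N*(q^2*(X1+X2+X3))" using I1 s by (simp add: algebra_simps)
  finally show "(p^2-q^2)*(X1*X2*X3) = q^2*(X1+X2+X3)" using Nnz by simp
qed




lemma sumfin:
  fixes a b c k d e1 e2 e3 p q r :: real
  assumes ab: "a > b" "b > 0" and kp: "k > 0"
    and g: "k^2*(a^2-b^2)^2 + 2*(a^2+b^2)*k - 3 = 0"
    and p: "p = 1-k*(a^2-b^2)" and q: "q = 1+k*(a^2-b^2)" and r: "r = 1 - k*(a^2+b^2)"
    and cc: "c^2 = a^2-b^2"
    and d: "2*d = k*(a^2-b^2)^2 + a^2 + b^2"
    and E2: "q^2*e2 = r^2 - q^2" and E3: "(p^2-q^2)*e3 = q^2*e1"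
  shows "a*b^2*(3*a^2 + 2*a*c*e1 + c^2*e2) = (a^2+b^2+d)*(a^3 + a^2*c*e1 + a*c^2*e2 + c^3*e3)"
proof -
  define A where "A = a^2"
  define B where "B = b^2"
  have ba: "b^2 < a^2" using ab by (simp add: power_strict_mono)
  have qp: "q > 0" unfolding q using ba kp by (simp add: add_pos_pos)
  have gA: "k^2*(A-B)^2 + 2*(A+B)*k - 3 = 0" using g A_def B_def by simp
  have qA: "q = 1+k*(A-B)" using q A_def B_def by simp
  have rA: "r = 1-k*(A+B)" using r A_def B_def by simp
  have pq: "p^2-q^2 = -4*k*(A-B)" unfolding p q A_def B_def by (simp add: algebra_simps power2_eq_square)
  have E3': "4*k*(A-B)*e3 = -(q^2*e1)" using E3 pq by simp
  have i: "8*k*A*B = (A+B+d)*(4*k*A - q^2)"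
  proof -
    have "8*k*A*(2*B) - (3*(A+B)+k*(A-B)^2)*(4*k*A-q^2) = (k^2*(A-B)^2 + 2*(A+B)*k - 3) *
       (-B + B^2*k - A - 2*A*B*k + A^2*k)"
      unfolding qA by (simp add: algebra_simps power2_eq_square)
    also have "\<dots> = 0" using gA by simp
    finally have h1: "8*k*A*(2*B) = (3*(A+B)+k*(A-B)^2)*(4*k*A-q^2)" by simp
    have h2: "3*(A+B)+k*(A-B)^2 = 2*(A+B+d)" using d A_def B_def by simp
    have "8*k*A*(2*B) = 2*(A+B+d)*(4*k*A-q^2)" using h1 unfolding h2 .
    then have "2*(8*k*A*B) = 2*((A+B+d)*(4*k*A-q^2))" by (simp add: algebra_simps)
    then show ?thesis by (simp add: mult_ac)
  qed
  have ii: "B*(3*A*q^2 + (A-B)*(r^2-q^2)) = (A+B+d)*(A*q^2 + (A-B)*(r^2-q^2))"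
  proof -
    have "(3*A*q^2 + (A-B)*(r^2-q^2))*(2*B) - (3*(A+B)+k*(A-B)^2)*(A*q^2 + (A-B)*(r^2-q^2)) = (k^2*(A-B)^2 + 2*(A+B)*k - 3) *
       (-A*B + 3*A*B^2*k + A^2 - 2*A^2*B*k - A^3*k)"
      unfolding qA rA by (simp add: algebra_simps power2_eq_square power3_eq_cube)
    also have "\<dots> = 0" using gA by simp
    finally have h1: "(3*A*q^2 + (A-B)*(r^2-q^2))*(2*B) = (3*(A+B)+k*(A-B)^2)*(A*q^2 + (A-B)*(r^2-q^2))" by simp
    have h2: "3*(A+B)+k*(A-B)^2 = 2*(A+B+d)" using d A_def B_def by simp
    have "(3*A*q^2 + (A-B)*(r^2-q^2))*(2*B) = 2*(A+B+d)*(A*q^2 + (A-B)*(r^2-q^2))" using h1 unfolding h2 .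
    then have "2*(B*(3*A*q^2 + (A-B)*(r^2-q^2))) = 2*((A+B+d)*(A*q^2 + (A-B)*(r^2-q^2)))" by (simp add: algebra_simps)
    then show ?thesis by simp
  qed
  have c3: "c^3 = c*(A-B)" using cc A_def B_def by (simp add: power3_eq_cube power2_eq_square)
  have a3: "a^3 = a*A" using A_def by (simp add: power3_eq_cube power2_eq_square)
  have "4*k*q^2*(a*B*(3*A + 2*a*c*e1 + (A-B)*e2)) = 
        c*q^2*e1*(8*k*A*B) + 4*k*a*(B*(3*A*q^2 + (A-B)*(q^2*e2)))"
    unfolding A_def by (simp add: algebra_simps power2_eq_square)
  also have "\<dots> = c*q^2*e1*((A+B+d)*(4*k*A - q^2)) + 4*k*a*((A+B+d)*(A*q^2 + (A-B)*(r^2-q^2)))"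
    using i ii E2 by simp
  also have "\<dots> = (A+B+d)*(4*k*q^2*(a*A) + A*c*e1*(4*k*q^2) + a*(A-B)*(4*k*(q^2*e2)) + c*q^2*(-(q^2*e1)))"
    unfolding E2[symmetric] by (simp add: algebra_simps)
  also have "\<dots> = (A+B+d)*(4*k*q^2*(a*A) + A*c*e1*(4*k*q^2) + a*(A-B)*(4*k*(q^2*e2)) + c*q^2*(4*k*(A-B)*e3))"
    using E3' by simp
  also have "\<dots> = 4*k*q^2*((A+B+d)*(a*A + A*c*e1 + a*(A-B)*e2 + c*(A-B)*e3))"
    by (simp add: algebra_simps)
  finally have "a*B*(3*A + 2*a*c*e1 + (A-B)*e2) = (A+B+d)*(a*A + A*c*e1 + a*(A-B)*e2 + c*(A-B)*e3)"
    using kp qp by simp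
  then show ?thesis unfolding cc c3 a3 A_def B_def by (simp add: power2_eq_square)
qed




lemma refl_alg:
  fixes w1 w2 z1 z2 n1 n2 jq jr :: real
  assumes "w1^2+w2^2=1" "z1^2+z2^2=1" "n1*w1+n2*w2 = -2*jq" "n1*z1+n2*z2 = -2*jr"
    "jq > 0" "jr > 0" "(w1+z1)*n2 - (w2+z2)*n1 = 0"
  shows "jq = jr"
proof -
  define s1 where "s1 = w1+z1"
  define s2 where "s2 = w2+z2"
  define d1 where "d1 = w1-z1"
  define d2 where "d2 = w2-z2"
  have lag: "(s1^2+s2^2)*(n1*d1+n2*d2) = (s1*n1+s2*n2)*(s1*d1+s2*d2) + (s1*n2-s2*n1)*(s1*d2-s2*d1)"
    by (simp add: algebra_simps power2_eq_square)
  have sd: "s1*d1+s2*d2 = 0" using assms(1,2) unfolding s1_def s2_def d1_def d2_def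
    by (simp add: algebra_simps power2_eq_square)
  have cr: "s1*n2-s2*n1 = 0" using assms(7) unfolding s1_def s2_def .
  have sn: "s1*n1+s2*n2 = -2*(jq+jr)" using assms(3,4) unfolding s1_def s2_def by (simp add: algebra_simps)
  have "s1 \<noteq> 0 \<or> s2 \<noteq> 0" using sn assms(5,6) by auto
  hence "s1^2+s2^2 \<noteq> 0" by (smt (verit) power2_less_eq_zero_iff zero_le_power2)
  moreover have "(s1^2+s2^2)*(n1*d1+n2*d2) = 0" using lag sd cr by simp
  ultimately have "n1*d1+n2*d2 = 0" by (metis mult_eq_0_iff)
  thus ?thesis using assms(3,4) unfolding d1_def d2_def by (simp add: algebra_simps)
qed

definition uu :: "real \<Rightarrow> real \<Rightarrow> pt \<Rightarrow> pt \<Rightarrow> real" where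
  "uu a b P Q = 1 - (fst P * fst Q / a^2 + snd P * snd Q / b^2)"

lemma uu_sym: "uu a b P Q = uu a b Q P" unfolding uu_def by (simp add: mult.commute)

lemma uu_pos:
  assumes "a > 0" "b > 0" "on_ellipse a b P" "on_ellipse a b Q" "P \<noteq> Q"
  shows "uu a b P Q > 0"
proof -
  obtain x1 y1 where P: "P = (x1,y1)" by (cases P)
  obtain x2 y2 where Q: "Q = (x2,y2)" by (cases Q)
  have e1: "(x1/a)^2 + (y1/b)^2 = 1" using assms(3) P unfolding on_ellipse_def by (simp add: power_divide)
  have e2: "(x2/a)^2 + (y2/b)^2 = 1" using assms(4) Q unfolding on_ellipse_def by (simp add: power_divide)
  have "2*uu a b P Q = (x1/a - x2/a)^2 + (y1/b - y2/b)^2"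
    using e1 e2 P Q assms(1,2) unfolding uu_def by (simp add: algebra_simps power2_eq_square)
  moreover have "x1/a \<noteq> x2/a \<or> y1/b \<noteq> y2/b" using assms(1,2,5) P Q by auto
  ultimately show ?thesis
    by (smt (verit) power2_less_eq_zero_iff zero_le_power2 right_minus_eq)
qed

lemma dist_sq:
  assumes "a > 0" "b > 0" "on_ellipse a b P" "on_ellipse a b Q"
  shows "(dist P Q)^2 = uu a b P Q *
     (a^2*(1 - (fst P/a)*(fst Q/a) + (snd P/b)*(snd Q/b)) + b^2*(1 + (fst P/a)*(fst Q/a) - (snd P/b)*(snd Q/b)))"
proof -
  obtain x1 y1 where P: "P = (x1,y1)" by (cases P)
  obtain x2 y2 where Q: "Q = (x2,y2)" by (cases Q)
  define X1 where "X1 = x1/a"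
  define X2 where "X2 = x2/a"
  define Y1 where "Y1 = y1/b"
  define Y2 where "Y2 = y2/b"
  have e1: "X1^2 + Y1^2 = 1" using assms(3) P unfolding on_ellipse_def X1_def Y1_def by (simp add: power_divide)
  have e2: "X2^2 + Y2^2 = 1" using assms(4) Q unfolding on_ellipse_def X2_def Y2_def by (simp add: power_divide)
  have x1: "x1 = a*X1" and x2: "x2 = a*X2" and y1: "y1 = b*Y1" and y2: "y2 = b*Y2"
    using assms(1,2) unfolding X1_def X2_def Y1_def Y2_def by auto
  have u: "uu a b P Q = 1 - X1*X2 - Y1*Y2" unfolding uu_def P Q x1 x2 y1 y2 using assms(1,2)
    by (simp add: power2_eq_square)
  have d: "(dist P Q)^2 = (x1-x2)^2 + (y1-y2)^2" unfolding P Q dist_Pair_Pair dist_real_def by simp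
  have i1: "(1 - X1*X2 - Y1*Y2)*(1-X1*X2+Y1*Y2) = (X1-X2)^2"
  proof -
    have "(1 - X1*X2 - Y1*Y2)*(1-X1*X2+Y1*Y2) = (1-X1*X2)^2 - Y1^2*Y2^2" by (simp add: algebra_simps power2_eq_square)
    also have "\<dots> = (1-X1*X2)^2 - (1-X1^2)*(1-X2^2)" using e1 e2 by (smt (verit))
    also have "\<dots> = (X1-X2)^2" by (simp add: algebra_simps power2_eq_square)
    finally show ?thesis .
  qed
  have i2: "(1 - X1*X2 - Y1*Y2)*(1+X1*X2-Y1*Y2) = (Y1-Y2)^2"
  proof -
    have "(1 - X1*X2 - Y1*Y2)*(1+X1*X2-Y1*Y2) = (1-Y1*Y2)^2 - X1^2*X2^2" by (simp add: algebra_simps power2_eq_square)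
    also have "\<dots> = (1-Y1*Y2)^2 - (1-Y1^2)*(1-Y2^2)" using e1 e2 by (smt (verit))
    also have "\<dots> = (Y1-Y2)^2" by (simp add: algebra_simps power2_eq_square)
    finally show ?thesis .
  qed
  have "(dist P Q)^2 = a^2*(X1-X2)^2 + b^2*(Y1-Y2)^2" unfolding d x1 x2 y1 y2
    by (simp add: algebra_simps power2_eq_square)
  also have "\<dots> = (1 - X1*X2 - Y1*Y2)*(a^2*(1-X1*X2+Y1*Y2) + b^2*(1+X1*X2-Y1*Y2))"
    unfolding i1[symmetric] i2[symmetric] by (simp add: algebra_simps)
  finally have "(dist P Q)^2 = uu a b P Q * (a^2*(1-X1*X2+Y1*Y2) + b^2*(1+X1*X2-Y1*Y2))" unfolding u .
  then show ?thesis unfolding X1_def X2_def Y1_def Y2_def P by (simp add: Q)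
qed

lemma refl_eq:
  assumes ab: "a > 0" "b > 0" and e: "on_ellipse a b P" "on_ellipse a b Q" "on_ellipse a b R"
    and ne: "P \<noteq> Q" "P \<noteq> R" and rf: "reflects_at a b Q P R"
  shows "uu a b P Q / dist P Q = uu a b P R / dist P R"
proof -
  obtain x1 y1 where P: "P = (x1,y1)" by (cases P)
  obtain x2 y2 where Q: "Q = (x2,y2)" by (cases Q)
  obtain x3 y3 where R: "R = (x3,y3)" by (cases R)
  define dq where "dq = dist P Q"
  define dr where "dr = dist P R"
  have dqp: "dq > 0" using ne unfolding dq_def by simp
  have drp: "dr > 0" using ne unfolding dr_def by simp
  have nq: "norm (Q - P) = dq" unfolding dq_def by (simp add: dist_norm norm_minus_commute)
  have nr: "norm (R - P) = dr" unfolding dr_def by (simp add: dist_norm norm_minus_commute)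
  have dq2: "dq^2 = (x2-x1)^2 + (y2-y1)^2" unfolding dq_def P Q dist_Pair_Pair dist_real_def
    by (simp add: power2_commute)
  have dr2: "dr^2 = (x3-x1)^2 + (y3-y1)^2" unfolding dr_def P R dist_Pair_Pair dist_real_def
    by (simp add: power2_commute)
  define w1 where "w1 = (x2-x1)/dq"
  define w2 where "w2 = (y2-y1)/dq"
  define z1 where "z1 = (x3-x1)/dr"
  define z2 where "z2 = (y3-y1)/dr"
  have uQ: "unitv (Q-P) = (w1,w2)" unfolding unitv_def nq by (simp add: P Q w1_def w2_def)
  have uR: "unitv (R-P) = (z1,z2)" unfolding unitv_def nr by (simp add: P R z1_def z2_def)
  have ww: "w1^2+w2^2 = 1"
  proof -
    have "w1^2+w2^2 = ((x2-x1)^2+(y2-y1)^2)/dq^2" unfolding w1_def w2_def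
      by (simp add: power_divide add_divide_distrib)
    also have "\<dots> = 1" unfolding dq2[symmetric] using dqp by simp
    finally show ?thesis .
  qed
  have vv: "z1^2+z2^2 = 1"
  proof -
    have "z1^2+z2^2 = ((x3-x1)^2+(y3-y1)^2)/dr^2" unfolding z1_def z2_def
      by (simp add: power_divide add_divide_distrib)
    also have "\<dots> = 1" unfolding dr2[symmetric] using drp by simp
    finally show ?thesis .
  qed
  have el1: "x1^2/a^2 + y1^2/b^2 = 1" using e(1) P unfolding on_ellipse_def by simp
  have nw: "(2*x1/a^2)*w1 + (2*y1/b^2)*w2 = -2*(uu a b P Q/dq)"
  proof -
    have "(2*x1/a^2)*w1 + (2*y1/b^2)*w2 = 2*((x1*x2/a^2 + y1*y2/b^2) - (x1^2/a^2 + y1^2/b^2))/dq"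
      unfolding w1_def w2_def by (simp add: algebra_simps add_divide_distrib diff_divide_distrib power2_eq_square)
    also have "\<dots> = -2*(uu a b P Q/dq)" unfolding el1 uu_def P Q by simp
    finally show ?thesis .
  qed
  have nv: "(2*x1/a^2)*z1 + (2*y1/b^2)*z2 = -2*(uu a b P R/dr)"
  proof -
    have "(2*x1/a^2)*z1 + (2*y1/b^2)*z2 = 2*((x1*x3/a^2 + y1*y3/b^2) - (x1^2/a^2 + y1^2/b^2))/dr"
      unfolding z1_def z2_def by (simp add: algebra_simps add_divide_distrib diff_divide_distrib power2_eq_square)
    also have "\<dots> = -2*(uu a b P R/dr)" unfolding el1 uu_def P R by simp
    finally show ?thesis .
  qed
  have jq: "uu a b P Q/dq > 0" using uu_pos[OF ab e(1,2) ne(1)] dqp by simp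
  have jr: "uu a b P R/dr > 0" using uu_pos[OF ab e(1,3) ne(2)] drp by simp
  have cr: "(w1+z1)*(2*y1/b^2) - (w2+z2)*(2*x1/a^2) = 0"
    using rf unfolding reflects_at_def cross2_def ell_normal_def uQ uR by (simp add: P)
  have "uu a b P Q/dq = uu a b P R/dr" by (rule refl_alg[OF ww vv nw nv jq jr cr])
  then show ?thesis unfolding dq_def dr_def .
qed




lemma focus_dist:
  assumes ab: "a > b" "b > 0" and e: "on_ellipse a b P"
  shows "dist P (- sqrt (a^2-b^2), 0) = a + sqrt (a^2-b^2) * (fst P / a)"
    and "a + sqrt (a^2-b^2) * (fst P / a) > 0"
proof -
  obtain x y where P: "P = (x,y)" by (cases P)
  define c where "c = sqrt (a^2-b^2)"
  have a0: "a > 0" using ab by simp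
  have ba: "b^2 < a^2" using ab by (simp add: power_strict_mono)
  have c2: "c^2 = a^2-b^2" proof -
    have "0 \<le> a^2-b^2" using ba by linarith
    then show ?thesis unfolding c_def by simp
  qed
  have c0: "c \<ge> 0" unfolding c_def by (rule real_sqrt_ge_zero) (use ba in linarith)
  have ca: "c < a" proof -
    have "c^2 < a^2" using c2 ab by simp
    thus ?thesis using a0 c0 by (smt (verit) power_mono)
  qed
  have el: "x^2/a^2 + y^2/b^2 = 1" using e P unfolding on_ellipse_def by simp
  have y2: "y^2 = b^2*(1 - x^2/a^2)" using el ab by (simp add: field_simps)
  have X1: "(x/a)^2 \<le> 1" using el ab by (smt (verit) power_divide zero_le_divide_iff zero_le_power2)
  have "\<bar>x/a\<bar> \<le> 1" using X1 abs_square_le_1 by blast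
  hence "c*\<bar>x/a\<bar> \<le> c*1" using c0 by (intro mult_left_mono) auto
  hence "\<bar>c*(x/a)\<bar> \<le> c" using c0 by (simp add: abs_mult)
  hence pos: "a + c*(x/a) > 0" using ca by linarith
  have "(dist P (-c,0))^2 = (x+c)^2 + y^2" unfolding P dist_Pair_Pair dist_real_def by simp
  also have "\<dots> = (a + c*(x/a))^2"
  proof -
    have "(x+c)^2 + b^2*(1-x^2/a^2) - (a+c*(x/a))^2 = (c^2+b^2-a^2)*(1-x^2/a^2)"
      using a0 by (simp add: field_simps power2_eq_square)
    also have "\<dots> = 0" using c2 by simp
    finally show ?thesis unfolding y2 by simp
  qed
  finally have "dist P (-c,0) = a + c*(x/a)" using pos
    by (metis abs_of_pos real_sqrt_abs real_sqrt_power zero_le_dist abs_of_nonneg)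
  then show "dist P (- sqrt (a^2-b^2), 0) = a + sqrt (a^2-b^2) * (fst P / a)" unfolding c_def P by simp
  show "a + sqrt (a^2-b^2) * (fst P / a) > 0" using pos unfolding c_def P by simp
qed

lemma joach_eq:
  assumes "on_ellipse a b P1" "P1 \<noteq> P3"
  shows "joachimsthal a b P3 P1 = uu a b P1 P3 / dist P1 P3"
proof -
  obtain x1 y1 where P1: "P1 = (x1,y1)" by (cases P1)
  obtain x3 y3 where P3: "P3 = (x3,y3)" by (cases P3)
  define d where "d = dist P1 P3"
  have n: "norm (P1 - P3) = d" unfolding d_def by (simp add: dist_norm)
  have dp: "d \<noteq> 0" using assms(2) unfolding d_def by simp
  have "joachimsthal a b P3 P1 = (1/2)*((2*x1/a^2)*((x1-x3)/d) + (2*y1/b^2)*((y1-y3)/d))"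
    unfolding joachimsthal_def unitv_def n by (simp add: P1 P3 ell_normal_def)
  also have "\<dots> = (x1^2/a^2 + y1^2/b^2 - (x1*x3/a^2 + y1*y3/b^2))/d"
    using dp by (simp add: divide_simps power2_eq_square) (simp add: algebra_simps)
  finally have j: "joachimsthal a b P3 P1 = (x1^2/a^2 + y1^2/b^2 - (x1*x3/a^2 + y1*y3/b^2))/d" .
  have "x1^2/a^2 + y1^2/b^2 = 1" using assms P1 unfolding on_ellipse_def by simp
  then show ?thesis using j unfolding d_def uu_def by (simp add: P1 P3)
qed

lemma pairk:
  fixes u d D J :: real
  assumes "u > 0" "d > 0" "d^2 = u*D" "u/d = J"
  shows "u = J^2*D" "d = J*D"
proof -
  have u: "u = J*d" unfolding assms(4)[symmetric] using assms(2) by simp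
  have "u*u = J^2*d^2" unfolding u by (simp add: power2_eq_square)
  also have "\<dots> = u*(J^2*D)" unfolding assms(3) by simp
  finally have "u*u = u*(J^2*D)" .
  then show u2: "u = J^2*D" using assms(1) by simp
  have "J*d = J*(J*D)" by (metis u u2 power2_eq_square mult.assoc)
  moreover have "J \<noteq> 0" using u assms(1) by auto
  ultimately show "d = J*D" by simp
qed

lemma finalid:
  fixes a b J L d :: real
  assumes ab: "a > b" "b > 0" and Jp: "J > 0"
    and g: "(J^2)^2*(a^2-b^2)^2 + 2*(a^2+b^2)*J^2 - 3 = 0"
    and dd: "2*d = J^2*(a^2-b^2)^2 + a^2 + b^2"
    and L: "L = 2*J*(a^2+b^2+d)"
  shows "(a^2 + b^2 + d) / (a * b^2) = J * sqrt 2 * sqrt (J * L + sqrt (9 - 2 * J * L) - 3) / (J * L - 4)"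
proof -
  define A where "A = a^2"
  define B where "B = b^2"
  define k where "k = J^2"
  have kp: "k > 0" unfolding k_def using Jp by simp
  have ba: "b^2 < a^2" using ab by (simp add: power_strict_mono)
  have Cp: "A - B > 0" using ba A_def B_def by simp
  have gA: "k^2*(A-B)^2 + 2*(A+B)*k - 3 = 0" using g unfolding k_def A_def B_def .
  have m: "J*L = 3 + k*(A+B)"
  proof -
    have d2: "2*(A+B+d) = k*(A-B)^2 + 3*(A+B)" using dd unfolding k_def A_def B_def by simp
    have "J*L = k*(2*(A+B+d))" unfolding L k_def A_def B_def by (simp add: algebra_simps power2_eq_square)
    also have "\<dots> = k*(k*(A-B)^2 + 3*(A+B))" unfolding d2 ..
    also have "\<dots> = 3 + k*(A+B)" using gA by (simp add: algebra_simps power2_eq_square)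
    finally show ?thesis .
  qed
  have s1: "sqrt (9 - 2*J*L) = k*(A-B)"
  proof -
    have "9 - 2*J*L = (k*(A-B))^2" using m gA by (simp add: algebra_simps power2_eq_square)
    then show ?thesis using kp Cp by simp
  qed
  have s2: "sqrt 2 * sqrt (J*L + sqrt (9 - 2*J*L) - 3) = 2*J*a"
  proof -
    have "J*L + sqrt (9 - 2*J*L) - 3 = 2*k*A" unfolding s1 m by (simp add: algebra_simps)
    hence "sqrt 2 * sqrt (J*L + sqrt (9 - 2*J*L) - 3) = sqrt ((2*J*a)^2)"
      unfolding k_def A_def by (simp add: real_sqrt_mult[symmetric] power_mult_distrib)
    also have "\<dots> = 2*J*a" using Jp ab by simp
    finally show ?thesis .
  qed
  have key: "4*k*A*B = (k*(A+B)-1)*(2*(A+B+d))"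
  proof -
    have "2*(A+B+d) = k*(A-B)^2 + 3*(A+B)" using dd unfolding k_def A_def B_def by simp
    hence "(k*(A+B)-1)*(2*(A+B+d)) = (k*(A+B)-1)*(k*(A-B)^2 + 3*(A+B))" by simp
    also have "\<dots> = 4*k*A*B + (A+B)*(k^2*(A-B)^2 + 2*(A+B)*k - 3)" by (simp add: algebra_simps power2_eq_square)
    finally show ?thesis using gA by simp
  qed
  have Ap: "A > 0" "B > 0" using ab A_def B_def by auto
  have ne: "k*(A+B) - 1 \<noteq> 0" using key kp Ap by auto
  have "J * sqrt 2 * sqrt (J * L + sqrt (9 - 2 * J * L) - 3) / (J * L - 4) = 2*k*a/(k*(A+B)-1)"
    using s2 m unfolding k_def by (simp add: algebra_simps power2_eq_square)
  also have "\<dots> = (A+B+d)/(a*B)"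
    using key ne ab Ap unfolding A_def by (simp add: field_simps power2_eq_square)
  finally show ?thesis unfolding A_def B_def by simp
qed




lemma perim:
  fixes A B k e2 SY p q r :: real
  assumes AB: "A > B" and kp: "k > 0" and g: "k^2*(A-B)^2 + 2*(A+B)*k - 3 = 0"
    and p: "p = 1-k*(A-B)" and q: "q = 1+k*(A-B)" and r: "r = 1 - k*(A+B)"
    and E2: "q^2*e2 = r^2 - q^2" and SY: "q*SY = 3*r - p*e2"
  shows "3*(A+B) - (A-B)*(e2 - SY) = k*(A-B)^2 + 3*(A+B)"
proof -
  have qp: "q > 0" unfolding q using AB kp by (simp add: add_pos_pos)
  have per: "3*r*q^2 - 2*(r^2-q^2) - k*(A-B)*q^3 = 0"
  proof -
    have "3*r*q^2 - 2*(r^2-q^2) - k*(A-B)*q^3 = (k^2*(A-B)^2 + 2*(A+B)*k - 3) *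
      (-1 + 2*B*k - B^2*k^2 - 4*A*k + 2*A*B*k^2 - A^2*k^2)"
      unfolding q r by (simp add: algebra_simps power2_eq_square power3_eq_cube)
    then show ?thesis using g by simp
  qed
  have "q^3*(e2 - SY) = q^2*(q*e2) - q^2*(q*SY)" by (simp add: algebra_simps power2_eq_square power3_eq_cube)
  also have "\<dots> = q*(q^2*e2) - q^2*(3*r) + q^2*(p*e2)" unfolding SY by (simp add: algebra_simps power2_eq_square)
  also have "\<dots> = (q+p)*(r^2-q^2) - 3*r*q^2" unfolding E2[symmetric] by (simp add: algebra_simps power2_eq_square)
  also have "\<dots> = 2*(r^2-q^2) - 3*r*q^2" unfolding p q by simp
  also have "\<dots> = q^3*(- k*(A-B))" using per by (simp add: algebra_simps)
  finally have "q^3*(e2 - SY) = q^3*(-k*(A-B))" .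
  moreover have "q^3 \<noteq> 0" using qp by simp
  ultimately have "e2 - SY = -k*(A-B)" by (metis mult_left_cancel)
  then have "(A-B)*(e2 - SY) = (A-B)*(-k*(A-B))" by simp
  then show ?thesis by (simp add: power2_eq_square algebra_simps)
qed


lemma unitX:
  assumes "a > 0" "b > 0" "on_ellipse a b P"
  shows "(fst P/a)^2 + (snd P/b)^2 = 1"
  using assms unfolding on_ellipse_def by (simp add: power_divide)

lemma uuX:
  assumes "a > 0" "b > 0"
  shows "uu a b P Q = 1 - (fst P/a)*(fst Q/a) - (snd P/b)*(snd Q/b)"
  using assms unfolding uu_def by (simp add: power2_eq_square)

lemma inv3:
  fixes x y z :: real
  assumes "x \<noteq> 0" "y \<noteq> 0" "z \<noteq> 0"
  shows "1/x + 1/y + 1/z = (y*z + x*z + x*y)/(x*y*z)"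
  using assms by (simp add: field_simps)

theorem mainTheorem11:
  fixes a b :: real and P1 P2 P3 :: "real \<times> real"
  assumes "a > b" and "b > 0"
    and "three_periodic a b P1 P2 P3"
  defines "c \<equiv> sqrt (a^2 - b^2)"
    and "\<delta> \<equiv> sqrt (a^4 - a^2 * b^2 + b^4)"
    and "J \<equiv> joachimsthal a b P3 P1"
    and "L \<equiv> perimeter P1 P2 P3"
  shows "1 / dist P1 (-c, 0) + 1 / dist P2 (-c, 0) + 1 / dist P3 (-c, 0)
           = (a^2 + b^2 + \<delta>) / (a * b^2)
         \<and> (a^2 + b^2 + \<delta>) / (a * b^2)
           = J * sqrt 2 * sqrt (J * L + sqrt (9 - 2 * J * L) - 3) / (J * L - 4)"
proof -
  have ab: "a > b" "b > 0" using assms by auto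
  have a0: "a > 0" using ab by simp
  have ba: "b^2 < a^2" using ab by (simp add: power_strict_mono)
  have e1: "on_ellipse a b P1" and e2: "on_ellipse a b P2" and e3: "on_ellipse a b P3"
    and n12: "P1 \<noteq> P2" and n23: "P2 \<noteq> P3" and n31: "P3 \<noteq> P1"
    and rf1: "reflects_at a b P3 P1 P2" and rf2: "reflects_at a b P1 P2 P3"
    using assms(3) unfolding three_periodic_def by auto
  define X1 where "X1 = fst P1/a"
  define X2 where "X2 = fst P2/a"
  define X3 where "X3 = fst P3/a"
  define Y1 where "Y1 = snd P1/b"
  define Y2 where "Y2 = snd P2/b"
  define Y3 where "Y3 = snd P3/b"
  have c1: "X1^2+Y1^2=1" unfolding X1_def Y1_def using unitX[OF a0 ab(2) e1] .
  have c2: "X2^2+Y2^2=1" unfolding X2_def Y2_def using unitX[OF a0 ab(2) e2] .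
  have c3: "X3^2+Y3^2=1" unfolding X3_def Y3_def using unitX[OF a0 ab(2) e3] .
  have J: "J = uu a b P1 P3 / dist P1 P3" unfolding J_def using joach_eq e1 n31 by auto
  have j13: "uu a b P1 P3 / dist P1 P3 = J" using J by simp
  have j12: "uu a b P1 P2 / dist P1 P2 = J"
    using refl_eq[OF a0 ab(2) e1 e3 e2 n31[symmetric] n12 rf1] J by simp
  have j23: "uu a b P2 P3 / dist P2 P3 = J"
    using refl_eq[OF a0 ab(2) e2 e1 e3 n12[symmetric] n23 rf2] j12
    by (simp add: uu_sym dist_commute)
  have Jp: "J > 0" using j13 uu_pos[OF a0 ab(2) e1 e3 n31[symmetric]] n31 by auto
  define k where "k = J^2"
  have kp: "k > 0" unfolding k_def using Jp by simp
  define D where "D = (\<lambda>X Y X' Y'. a^2*(1-X*X'+Y*Y') + b^2*(1+X*X'-Y*Y'))"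
  have pk12: "uu a b P1 P2 = J^2 * D X1 Y1 X2 Y2" "dist P1 P2 = J * D X1 Y1 X2 Y2"
    using pairk[OF uu_pos[OF a0 ab(2) e1 e2 n12] _ dist_sq[OF a0 ab(2) e1 e2] j12] n12
    unfolding D_def X1_def X2_def Y1_def Y2_def by auto
  have pk13: "uu a b P1 P3 = J^2 * D X1 Y1 X3 Y3" "dist P1 P3 = J * D X1 Y1 X3 Y3"
    using pairk[OF uu_pos[OF a0 ab(2) e1 e3 n31[symmetric]] _ dist_sq[OF a0 ab(2) e1 e3] j13] n31
    unfolding D_def X1_def X3_def Y1_def Y3_def by auto
  have pk23: "uu a b P2 P3 = J^2 * D X2 Y2 X3 Y3" "dist P2 P3 = J * D X2 Y2 X3 Y3"
    using pairk[OF uu_pos[OF a0 ab(2) e2 e3 n23] _ dist_sq[OF a0 ab(2) e2 e3] j23] n23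
    unfolding D_def X2_def X3_def Y2_def Y3_def by auto
  have u12: "1 - X1*X2 - Y1*Y2 = k*(a^2*(1-X1*X2+Y1*Y2)+b^2*(1+X1*X2-Y1*Y2))"
    using pk12(1) uuX[OF a0 ab(2)] unfolding k_def D_def X1_def X2_def Y1_def Y2_def by simp
  have u13: "1 - X1*X3 - Y1*Y3 = k*(a^2*(1-X1*X3+Y1*Y3)+b^2*(1+X1*X3-Y1*Y3))"
    using pk13(1) uuX[OF a0 ab(2)] unfolding k_def D_def X1_def X3_def Y1_def Y3_def by simp
  have u23: "1 - X2*X3 - Y2*Y3 = k*(a^2*(1-X2*X3+Y2*Y3)+b^2*(1+X2*X3-Y2*Y3))"
    using pk23(1) uuX[OF a0 ab(2)] unfolding k_def D_def X2_def X3_def Y2_def Y3_def by simp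
  note r12 = polar[OF u12] and r13 = polar[OF u13] and r23 = polar[OF u23]
  have ne23: "(X2,Y2) \<noteq> (X3,Y3)"
  proof
    assume "(X2,Y2) = (X3,Y3)"
    hence "fst P2 = fst P3" "snd P2 = snd P3" unfolding X2_def X3_def Y2_def Y3_def using a0 ab by auto
    hence "P2 = P3" by (simp add: prod_eq_iff)
    thus False using n23 by simp
  qed
  have AB: "a^2 > b^2" "b^2 > 0" using ba ab by auto
  define p where "p = 1-k*(a^2-b^2)"
  define q where "q = 1+k*(a^2-b^2)"
  define r where "r = 1 - k*(a^2+b^2)"
  define N where "N = (p*X1)^2+(q*Y1)^2"
  note cr = core[OF AB kp c1 c2 c3 ne23 r12 r13 r23, folded p_def q_def r_def, folded N_def]
  have Y1s: "Y1^2 = 1 - X1^2" using c1 by simp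
  note sf = symfun[OF cr(1) p_def q_def r_def N_def cr(2) Y1s cr(3) cr(4)]
  have g: "k^2*(a^2-b^2)^2 + 2*(a^2+b^2)*k - 3 = 0" using cr(1) .
  have nn: "a^4 - a^2*b^2 + b^4 \<ge> 0"
    proof -
      have "a^4 - a^2*b^2 + b^4 = (a^2-b^2)^2 + a^2*b^2" by (simp add: algebra_simps power2_eq_square power4_eq_xxxx)
      moreover have "(a^2-b^2)^2 + a^2*b^2 \<ge> 0" by simp
      ultimately show ?thesis by linarith
    qed
  have dd: "2*\<delta> = k*(a^2-b^2)^2 + a^2 + b^2"
  proof -
    have pos: "k*(a^2-b^2)^2 + a^2 + b^2 > 0" using kp ab by (simp add: add_pos_pos)
    have "(k*(a^2-b^2)^2 + a^2 + b^2)^2 = (a^2+b^2)^2 + 3*(a^2-b^2)^2 + (a^2-b^2)^2*(k^2*(a^2-b^2)^2 + 2*(a^2+b^2)*k - 3)"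
      by (simp add: algebra_simps power2_eq_square)
    also have "\<dots> = (2*\<delta>)^2"
    proof -
      have d2: "\<delta>^2 = a^4 - a^2*b^2 + b^4" unfolding \<delta>_def using nn by simp
      show ?thesis unfolding g power_mult_distrib d2
        by (simp add: algebra_simps power2_eq_square power4_eq_xxxx)
    qed
    finally have sq: "(k*(a^2-b^2)^2 + a^2 + b^2)^2 = (2*\<delta>)^2" .
    have ge: "2*\<delta> \<ge> 0" unfolding \<delta>_def using nn by simp
    have "k*(a^2-b^2)^2 + a^2 + b^2 = 2*\<delta>"
      using power2_eq_iff_nonneg[OF less_imp_le[OF pos] ge] sq by blast
    then show ?thesis by simp
  qed
  have cc: "c^2 = a^2-b^2" unfolding c_def using ba by simp
  note sm = sumfin[OF ab kp g p_def q_def r_def cc dd sf(1) sf(2)]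
  have f1: "dist P1 (-c,0) = a + c*X1" "a + c*X1 > 0" using focus_dist[OF ab e1] unfolding c_def X1_def by auto
  have f2: "dist P2 (-c,0) = a + c*X2" "a + c*X2 > 0" using focus_dist[OF ab e2] unfolding c_def X2_def by auto
  have f3: "dist P3 (-c,0) = a + c*X3" "a + c*X3 > 0" using focus_dist[OF ab e3] unfolding c_def X3_def by auto
  have part1: "1 / dist P1 (-c, 0) + 1 / dist P2 (-c, 0) + 1 / dist P3 (-c, 0) = (a^2 + b^2 + \<delta>) / (a * b^2)"
  proof -
    define E1 where "E1 = X1+X2+X3"
    define E2 where "E2 = X1*X2+X1*X3+X2*X3"
    define E3 where "E3 = X1*X2*X3"
    have num: "(a+c*X2)*(a+c*X3) + (a+c*X1)*(a+c*X3) + (a+c*X1)*(a+c*X2) = 3*a^2 + 2*a*c*E1 + c^2*E2"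
      unfolding E1_def E2_def by (simp add: algebra_simps power2_eq_square)
    have den: "(a+c*X1)*(a+c*X2)*(a+c*X3) = a^3 + a^2*c*E1 + a*c^2*E2 + c^3*E3"
      unfolding E1_def E2_def E3_def by (simp add: algebra_simps power2_eq_square power3_eq_cube)
    have "1 / dist P1 (-c, 0) + 1 / dist P2 (-c, 0) + 1 / dist P3 (-c, 0)
       = ((a+c*X2)*(a+c*X3) + (a+c*X1)*(a+c*X3) + (a+c*X1)*(a+c*X2)) / ((a+c*X1)*(a+c*X2)*(a+c*X3))"
      unfolding f1(1) f2(1) f3(1) using f1(2) f2(2) f3(2) by (intro inv3) auto
    also have "\<dots> = (3*a^2 + 2*a*c*E1 + c^2*E2) / (a^3 + a^2*c*E1 + a*c^2*E2 + c^3*E3)"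
      unfolding num den ..
    also have "\<dots> = (a^2 + b^2 + \<delta>) / (a * b^2)"
    proof -
      have dpos: "a^3 + a^2*c*E1 + a*c^2*E2 + c^3*E3 \<noteq> 0" unfolding den[symmetric]
        using f1(2) f2(2) f3(2) by simp
      have "a*b^2*(3*a^2 + 2*a*c*E1 + c^2*E2) = (a^2+b^2+\<delta>)*(a^3 + a^2*c*E1 + a*c^2*E2 + c^3*E3)"
        using sm unfolding E1_def E2_def E3_def by (simp add: mult.assoc)
      then show ?thesis using dpos a0 ab by (simp add: field_simps)
    qed
    finally show ?thesis .
  qed
  have SY: "q*(Y1*Y2+Y1*Y3+Y2*Y3) = 3*r - p*(X1*X2+X1*X3+X2*X3)"
    using r12 r13 r23 unfolding p_def q_def r_def by (simp add: algebra_simps)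
  note pe = perim[OF AB(1) kp g p_def q_def r_def sf(1) SY]
  have Lv: "L = 2*J*(a^2+b^2+\<delta>)"
  proof -
    have "L = J*(D X1 Y1 X2 Y2 + D X2 Y2 X3 Y3 + D X1 Y1 X3 Y3)"
      unfolding L_def perimeter_def using pk12(2) pk23(2) pk13(2)
      by (simp add: dist_commute algebra_simps)
    also have "D X1 Y1 X2 Y2 + D X2 Y2 X3 Y3 + D X1 Y1 X3 Y3 =
       3*(a^2+b^2) - (a^2-b^2)*((X1*X2+X1*X3+X2*X3) - (Y1*Y2+Y1*Y3+Y2*Y3))"
      unfolding D_def by (simp add: algebra_simps)
    also have "\<dots> = 2*(a^2+b^2+\<delta>)" unfolding pe using dd by simp
    finally show ?thesis by simp
  qed
  have part2: "(a^2 + b^2 + \<delta>) / (a * b^2) = J * sqrt 2 * sqrt (J * L + sqrt (9 - 2 * J * L) - 3) / (J * L - 4)"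
    by (rule finalid[OF ab Jp _ _ Lv]) (use g dd in \<open>simp_all add: k_def\<close>)
  show ?thesis using part1 part2 by simp
qed

end
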